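(* Let $n,N\in\mathbb{N}$, $0\le\rho\le1$, $m\in\mathbb{R}$, and $a\in L^\infty S^m_\rho(n,N)$. For $x\in\mathbb{R}^n$ and $Y=(y_1,\dots,y_N)\in\mathbb{R}^{nN}$ let \[ K(x,Y):=\int_{\mathbb{R}^{nN}} a(x,\Xi)\prod_{j=1}^N e^{i(x-y_j)\cdot\xi_j}\,d\Xi . \] Suppose that either $\rho>0$ (and $m\in\mathbb{R}$ arbitrary), or $\rho=0$ and $m<-nN$. Then for all $x,Y$ such that $S:=\{j\in\{1,\dots,N\}: |x-y_j|\ge1\}\neq\emptyset$ and all numbers $N_j\ge0$ ($j\in S$), one has \[ |K(x,Y)|\le C\prod_{j\in S}|x-y_j|^{-N_j}, \] with $C$ independent of $x$ and $Y$.
   Context: For $\Xi=(\xi_1,\dots,\xi_N)\in\mathbb{R}^{nN}$, $\langle\Xi\rangle=(1+|\Xi|^2)^{1/2}$. A function $a:\mathbb{R}^n\times\mathbb{R}^{nN}\to\mathbb{C}$ belongs to $L^\infty S^m_\rho(n,N)$ if for every multi-index $\alpha\in\mathbb{Z}_+^{nN}$ there is $C_\alpha$ with $\operatorname{ess\,sup}_x|\partial_\Xi^\alpha a(x,\Xi)|\le C_\alpha\langle\Xi\rangle^{m-\rho|\alpha|}$. The integral defining $K$ is understood as an oscillatory integral (sum of the pieces $a\varphi_k$ over a dyadic Littlewood–Paley partition of unity in $\mathbb{R}^{nN}$). *)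

theory Defs
  imports "HOL-Analysis.Analysis"
begin

text \<open>For ds a list of standard basis vectors this is the partial derivative
  of multi-index alpha, |alpha| = length ds.\<close>
fun dderiv :: "'a::euclidean_space list \<Rightarrow> ('a \<Rightarrow> 'b::real_normed_vector) \<Rightarrow> 'a \<Rightarrow> 'b" where
  "dderiv [] f = f"
| "dderiv (v # ds) f = (\<lambda>z. frechet_derivative (dderiv ds f) (at z) v)"

definition smooth_fun :: "('a::euclidean_space \<Rightarrow> 'b::real_normed_vector) \<Rightarrow> bool" where
  "smooth_fun f \<longleftrightarrow> (\<forall>ds \<in> lists Basis. \<forall>z. dderiv ds f differentiable (at z))"

definition jbr :: "'a::real_normed_vector \<Rightarrow> real" where
  "jbr z = sqrt (1 + (norm z)\<^sup>2)"

text \<open>Points of R^n are real^'n, points of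
  R^{nN} are (real^'n)^'N, i.e. Xi = (xi_1,...,xi_N) with Xi $ j = xi_j.\<close>
definition LinfS :: "real \<Rightarrow> real \<Rightarrow> (real^'n \<Rightarrow> (real^'n)^'N \<Rightarrow> complex) \<Rightarrow> bool" where
  "LinfS m \<rho> a \<longleftrightarrow>
     (\<lambda>p. a (fst p) (snd p)) \<in> borel_measurable borel \<and>
     (AE x in lborel. smooth_fun (a x)) \<and>
     (\<forall>ds \<in> lists Basis. \<exists>C. \<forall>\<Xi>.
        AE x in lborel. norm (dderiv ds (a x) \<Xi>) \<le> C * jbr \<Xi> powr (m - \<rho> * real (length ds)))"

text \<open>Dyadic Littlewood-Paley partition of unity generated by phi0:
  phi0 smooth, equal to 1 on |Xi| \<le> 1 and to 0 on |Xi| \<ge> 2;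
  phi_0 = phi0, phi_k(Xi) = phi0(2^-k Xi) - phi0(2^-(k-1) Xi) for k \<ge> 1.\<close>
definition LP_generator :: "('a::euclidean_space \<Rightarrow> real) \<Rightarrow> bool" where
  "LP_generator \<phi>0 \<longleftrightarrow> smooth_fun \<phi>0 \<and>
     (\<forall>z. 0 \<le> \<phi>0 z \<and> \<phi>0 z \<le> 1) \<and>
     (\<forall>z. norm z \<le> 1 \<longrightarrow> \<phi>0 z = 1) \<and> (\<forall>z. norm z \<ge> 2 \<longrightarrow> \<phi>0 z = 0)"

definition LP_piece :: "('a::euclidean_space \<Rightarrow> real) \<Rightarrow> nat \<Rightarrow> 'a \<Rightarrow> real" where
  "LP_piece \<phi>0 k z = (if k = 0 then \<phi>0 z
      else \<phi>0 ((1 / 2 ^ k) *\<^sub>R z) - \<phi>0 ((1 / 2 ^ (k - 1)) *\<^sub>R z))"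

definition phase :: "real^'n \<Rightarrow> (real^'n)^'N \<Rightarrow> (real^'n)^'N \<Rightarrow> complex" where
  "phase x Y \<Xi> = (\<Prod>j\<in>UNIV. exp (\<i> * complex_of_real ((x - Y $ j) \<bullet> (\<Xi> $ j))))"

definition K_piece :: "(real^'n \<Rightarrow> (real^'n)^'N \<Rightarrow> complex) \<Rightarrow> ((real^'n)^'N \<Rightarrow> real)
     \<Rightarrow> real^'n \<Rightarrow> (real^'n)^'N \<Rightarrow> nat \<Rightarrow> complex" where
  "K_piece a \<phi>0 x Y k =
     (LINT \<Xi>|lborel. a x \<Xi> * complex_of_real (LP_piece \<phi>0 k \<Xi>) * phase x Y \<Xi>)"

definition K_osc :: "(real^'n \<Rightarrow> (real^'n)^'N \<Rightarrow> complex) \<Rightarrow> ((real^'n)^'N \<Rightarrow> real)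
     \<Rightarrow> real^'n \<Rightarrow> (real^'n)^'N \<Rightarrow> complex" where
  "K_osc a \<phi>0 x Y = (\<Sum>k. K_piece a \<phi>0 x Y k)"

definition far_set :: "real^'n \<Rightarrow> (real^'n)^'N \<Rightarrow> 'N set" where
  "far_set x Y = {j. norm (x - Y $ j) \<ge> 1}"

end

theory Submission
  imports Defs
begin

lemma dderiv_append: "dderiv ds (dderiv es f) = dderiv (ds @ es) f"
  by (induction ds) auto

lemma smooth_dderiv:
  assumes "smooth_fun f" "ds \<in> lists Basis"
  shows "smooth_fun (dderiv ds f)"
  using assms unfolding smooth_fun_def by (auto simp: dderiv_append)

lemma smooth_differentiable:
  assumes "smooth_fun f" "ds \<in> lists Basis"
  shows "dderiv ds f differentiable (at z)"
  using assms unfolding smooth_fun_def by auto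

lemma smooth_continuous:
  assumes "smooth_fun f" "ds \<in> lists Basis"
  shows "continuous_on UNIV (dderiv ds f)"
  using smooth_differentiable[OF assms]
  by (meson continuous_at_imp_continuous_on differentiable_imp_continuous_within)

lemma frechet_derivative_local:
  assumes "open U" "z \<in> U" "\<And>w. w \<in> U \<Longrightarrow> f w = g w"
  shows "frechet_derivative f (at z) = frechet_derivative g (at z)"
proof -
  have "\<And>f'. (f has_derivative f') (at z) \<longleftrightarrow> (g has_derivative f') (at z)"
    using has_derivative_transform_within_open[OF _ assms(1,2), of f _ _ g]
          has_derivative_transform_within_open[OF _ assms(1,2), of g _ _ f] assms(3)
    by metis
  then show ?thesis unfolding frechet_derivative_def by simp
qed

lemma dderiv_local:
  assumes "open U" "z \<in> U" "\<And>w. w \<in> U \<Longrightarrow> f w = g w"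
  shows "dderiv ds f z = dderiv ds g z"
  using assms(2)
proof (induction ds arbitrary: z)
  case Nil then show ?case using assms(3) by simp
next
  case (Cons v ds)
  then show ?case
    using frechet_derivative_local[OF assms(1) Cons(2), of "dderiv ds f" "dderiv ds g"] by simp
qed

lemma dderiv_zero[simp]: "dderiv ds (\<lambda>_. 0) = (\<lambda>_. 0)"
  by (induction ds) (auto simp: frechet_derivative_const)

lemma dderiv_local_zero:
  assumes "open U" "z \<in> U" "\<And>w. w \<in> U \<Longrightarrow> f w = 0"
  shows "dderiv ds f z = 0"
  using dderiv_local[OF assms(1,2), of f "\<lambda>_. 0" ds] assms(3) by simp

lemma dderiv_Cons_works:
  assumes "smooth_fun f" "ds \<in> lists Basis"
  shows "(dderiv ds f has_derivative (\<lambda>h. frechet_derivative (dderiv ds f) (at z) h)) (at z)"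
  using smooth_differentiable[OF assms] frechet_derivative_works by (metis eta_contract_eq)

lemma dderiv_linear:
  fixes f :: "'a::euclidean_space \<Rightarrow> 'b::real_normed_vector" and L :: "'b \<Rightarrow> 'c::real_normed_vector"
  assumes "bounded_linear L" "smooth_fun f" "ds \<in> lists Basis"
  shows "dderiv ds (\<lambda>z. L (f z)) = (\<lambda>z. L (dderiv ds f z))"
  using assms(3)
proof (induction ds)
  case Nil then show ?case by simp
next
  case (Cons v ds)
  have ds: "ds \<in> lists Basis" using Cons by simp
  show ?case
  proof
    fix z
    have "((\<lambda>z. L (dderiv ds f z)) has_derivative (\<lambda>h. L (frechet_derivative (dderiv ds f) (at z) h))) (at z)"
      using bounded_linear.has_derivative[OF assms(1) dderiv_Cons_works[OF assms(2) ds]] .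
    then have "frechet_derivative (\<lambda>z. L (dderiv ds f z)) (at z) = (\<lambda>h. L (frechet_derivative (dderiv ds f) (at z) h))"
      using frechet_derivative_at by metis
    then show "dderiv (v # ds) (\<lambda>z. L (f z)) z = L (dderiv (v # ds) f z)"
      using Cons.IH by simp
  qed
qed

lemma smooth_linear:
  fixes f :: "'a::euclidean_space \<Rightarrow> 'b::real_normed_vector" and L :: "'b \<Rightarrow> 'c::real_normed_vector"
  assumes "bounded_linear L" "smooth_fun f"
  shows "smooth_fun (\<lambda>z. L (f z))"
  unfolding smooth_fun_def
proof (intro ballI allI)
  fix ds :: "'a list" and z assume ds: "ds \<in> lists Basis"
  show "dderiv ds (\<lambda>z. L (f z)) differentiable at z"
    unfolding dderiv_linear[OF assms ds]
    using differentiable_compose[OF bounded_linear_imp_differentiable[OF assms(1)] smooth_differentiable[OF assms(2) ds]] by (simp add: o_def)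
qed

lemma dderiv_diff:
  fixes f g :: "'a::euclidean_space \<Rightarrow> 'b::real_normed_vector"
  assumes "smooth_fun f" "smooth_fun g" "ds \<in> lists Basis"
  shows "dderiv ds (\<lambda>z. f z - g z) = (\<lambda>z. dderiv ds f z - dderiv ds g z)"
  using assms(3)
proof (induction ds)
  case Nil then show ?case by simp
next
  case (Cons v ds)
  have ds: "ds \<in> lists Basis" using Cons by simp
  show ?case
  proof
    fix z
    have "((\<lambda>z. dderiv ds f z - dderiv ds g z) has_derivative (\<lambda>h. frechet_derivative (dderiv ds f) (at z) h - frechet_derivative (dderiv ds g) (at z) h)) (at z)"
      by (intro has_derivative_diff dderiv_Cons_works assms ds)
    then have "frechet_derivative (\<lambda>z. dderiv ds f z - dderiv ds g z) (at z) = (\<lambda>h. frechet_derivative (dderiv ds f) (at z) h - frechet_derivative (dderiv ds g) (at z) h)"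
      using frechet_derivative_at by metis
    then show "dderiv (v # ds) (\<lambda>z. f z - g z) z = dderiv (v # ds) f z - dderiv (v # ds) g z"
      using Cons.IH by simp
  qed
qed

lemma smooth_diff:
  fixes f g :: "'a::euclidean_space \<Rightarrow> 'b::real_normed_vector"
  assumes "smooth_fun f" "smooth_fun g"
  shows "smooth_fun (\<lambda>z. f z - g z)"
  unfolding smooth_fun_def
proof (intro ballI allI)
  fix ds :: "'a list" and z assume ds: "ds \<in> lists Basis"
  show "dderiv ds (\<lambda>z. f z - g z) differentiable at z"
    unfolding dderiv_diff[OF assms ds]
    by (intro differentiable_diff smooth_differentiable assms ds)
qed

lemma dderiv_scale:
  fixes f :: "'a::euclidean_space \<Rightarrow> 'b::real_normed_vector"
  assumes "smooth_fun f" "ds \<in> lists Basis"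
  shows "dderiv ds (\<lambda>z. f (c *\<^sub>R z)) = (\<lambda>z. (c ^ length ds) *\<^sub>R dderiv ds f (c *\<^sub>R z))"
  using assms(2)
proof (induction ds)
  case Nil then show ?case by simp
next
  case (Cons v ds)
  have ds: "ds \<in> lists Basis" using Cons by simp
  show ?case
  proof
    fix z
    have d1: "(dderiv ds f has_derivative (\<lambda>h. frechet_derivative (dderiv ds f) (at (c *\<^sub>R z)) h)) (at (c *\<^sub>R z))"
      by (rule dderiv_Cons_works[OF assms(1) ds])
    have "((\<lambda>z. dderiv ds f (c *\<^sub>R z)) has_derivative (\<lambda>h. frechet_derivative (dderiv ds f) (at (c *\<^sub>R z)) (c *\<^sub>R h))) (at z)"
      using has_derivative_compose[of "\<lambda>z. c *\<^sub>R z" "\<lambda>h. c *\<^sub>R h" z UNIV "dderiv ds f", OF _ d1]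
      by (simp add: o_def has_derivative_scaleR_right[OF has_derivative_ident])
    then have "((\<lambda>z. (c ^ length ds) *\<^sub>R dderiv ds f (c *\<^sub>R z)) has_derivative (\<lambda>h. (c ^ length ds) *\<^sub>R frechet_derivative (dderiv ds f) (at (c *\<^sub>R z)) (c *\<^sub>R h))) (at z)"
      by (rule has_derivative_scaleR_right)
    then have "frechet_derivative (\<lambda>z. (c ^ length ds) *\<^sub>R dderiv ds f (c *\<^sub>R z)) (at z) = (\<lambda>h. (c ^ length ds) *\<^sub>R frechet_derivative (dderiv ds f) (at (c *\<^sub>R z)) (c *\<^sub>R h))"
      using frechet_derivative_at by metis
    moreover have "frechet_derivative (dderiv ds f) (at (c *\<^sub>R z)) (c *\<^sub>R v) = c *\<^sub>R frechet_derivative (dderiv ds f) (at (c *\<^sub>R z)) v"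
      using d1 has_derivative_linear linear_scale by blast
    ultimately show "dderiv (v # ds) (\<lambda>z. f (c *\<^sub>R z)) z = (c ^ length (v # ds)) *\<^sub>R dderiv (v # ds) f (c *\<^sub>R z)"
      using Cons.IH by (simp add: mult.commute)
  qed
qed

lemma smooth_scale:
  fixes f :: "'a::euclidean_space \<Rightarrow> 'b::real_normed_vector"
  assumes "smooth_fun f"
  shows "smooth_fun (\<lambda>z. f (c *\<^sub>R z))"
  unfolding smooth_fun_def
proof (intro ballI allI)
  fix ds :: "'a list" and z assume ds: "ds \<in> lists Basis"
  have "(\<lambda>z. dderiv ds f (c *\<^sub>R z)) differentiable at z"
    using differentiable_chain_at[of "\<lambda>z. c *\<^sub>R z" z "dderiv ds f"] smooth_differentiable[OF assms ds]
    by (simp add: o_def)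
  then show "dderiv ds (\<lambda>z. f (c *\<^sub>R z)) differentiable at z"
    unfolding dderiv_scale[OF assms ds] by (intro differentiable_scaleR) auto
qed


fun splits :: "'a list \<Rightarrow> ('a list \<times> 'a list) list" where
  "splits [] = [([], [])]"
| "splits (v # ds) = map (\<lambda>(p, q). (v # p, q)) (splits ds) @ map (\<lambda>(p, q). (p, v # q)) (splits ds)"

lemma splits_props:
  "(p, q) \<in> set (splits ds) \<Longrightarrow> length p + length q = length ds \<and> set p \<subseteq> set ds \<and> set q \<subseteq> set ds"
  by (induction ds arbitrary: p q) (auto, blast+)

lemma has_derivative_sum_list:
  assumes "\<And>x. x \<in> set xs \<Longrightarrow> (F x has_derivative F' x) (at z)"
  shows "((\<lambda>z. \<Sum>x\<leftarrow>xs. F x z) has_derivative (\<lambda>h. \<Sum>x\<leftarrow>xs. F' x h)) (at z)"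
  using assms
proof (induction xs)
  case Nil then show ?case by simp
next
  case (Cons a xs)
  then show ?case by (auto intro!: has_derivative_add)
qed

lemma dderiv_mult:
  fixes f g :: "'a::euclidean_space \<Rightarrow> 'b::real_normed_algebra"
  assumes "smooth_fun f" "smooth_fun g" "ds \<in> lists Basis"
  shows "dderiv ds (\<lambda>z. f z * g z) = (\<lambda>z. \<Sum>(p, q)\<leftarrow>splits ds. dderiv p f z * dderiv q g z)"
  using assms(3)
proof (induction ds)
  case Nil then show ?case by simp
next
  case (Cons v ds)
  have ds: "ds \<in> lists Basis" using Cons by simp
  show ?case
  proof
    fix z
    let ?F = "\<lambda>pq z. dderiv (fst pq) f z * dderiv (snd pq) g z"
    let ?F' = "\<lambda>pq h. dderiv (fst pq) f z * frechet_derivative (dderiv (snd pq) g) (at z) h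
                  + frechet_derivative (dderiv (fst pq) f) (at z) h * dderiv (snd pq) g z"
    have "(?F pq has_derivative ?F' pq) (at z)" if "pq \<in> set (splits ds)" for pq
    proof -
      obtain p q where pq: "pq = (p, q)" by fastforce
      have "set p \<subseteq> set ds" "set q \<subseteq> set ds" using splits_props that pq by blast+
      then have "p \<in> lists Basis" "q \<in> lists Basis" using ds by auto
      then show ?thesis unfolding pq fst_conv snd_conv
        using has_derivative_mult[OF dderiv_Cons_works[OF assms(1), of p z] dderiv_Cons_works[OF assms(2), of q z]] by simp
    qed
    then have hd: "((\<lambda>z. \<Sum>pq\<leftarrow>splits ds. ?F pq z) has_derivative (\<lambda>h. \<Sum>pq\<leftarrow>splits ds. ?F' pq h)) (at z)"
      by (rule has_derivative_sum_list)
    have fd: "frechet_derivative (\<lambda>z. \<Sum>pq\<leftarrow>splits ds. ?F pq z) (at z) = (\<lambda>h. \<Sum>pq\<leftarrow>splits ds. ?F' pq h)"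
      using frechet_derivative_at[OF hd] by simp
    have eqF: "(\<lambda>z. \<Sum>(p, q)\<leftarrow>splits ds. dderiv p f z * dderiv q g z) = (\<lambda>z. \<Sum>pq\<leftarrow>splits ds. ?F pq z)"
      by (simp add: case_prod_beta')
    show "dderiv (v # ds) (\<lambda>z. f z * g z) z = (\<Sum>(p, q)\<leftarrow>splits (v # ds). dderiv p f z * dderiv q g z)"
    proof -
      have "dderiv (v # ds) (\<lambda>z. f z * g z) z = (\<Sum>pq\<leftarrow>splits ds. ?F' pq v)"
        using Cons.IH fd eqF by simp
      also have "\<dots> = (\<Sum>pq\<leftarrow>splits ds. dderiv (fst pq) f z * dderiv (v # snd pq) g z)
                   + (\<Sum>pq\<leftarrow>splits ds. dderiv (v # fst pq) f z * dderiv (snd pq) g z)"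
        by (simp add: sum_list_addf)
      also have "\<dots> = (\<Sum>(p, q)\<leftarrow>splits (v # ds). dderiv p f z * dderiv q g z)"
        by (simp add: case_prod_beta' o_def)
      finally show ?thesis .
    qed
  qed
qed

lemma smooth_mult:
  fixes f g :: "'a::euclidean_space \<Rightarrow> 'b::real_normed_algebra"
  assumes "smooth_fun f" "smooth_fun g"
  shows "smooth_fun (\<lambda>z. f z * g z)"
  unfolding smooth_fun_def
proof (intro ballI allI)
  fix ds :: "'a list" and z assume ds: "ds \<in> lists Basis"
  have "(\<lambda>z. \<Sum>x\<leftarrow>splits ds. dderiv (fst x) f z * dderiv (snd x) g z) differentiable at z"
  proof -
    have "((\<lambda>z. \<Sum>x\<leftarrow>splits ds. dderiv (fst x) f z * dderiv (snd x) g z) has_derivative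
      (\<lambda>h. \<Sum>x\<leftarrow>splits ds. dderiv (fst x) f z * frechet_derivative (dderiv (snd x) g) (at z) h
                  + frechet_derivative (dderiv (fst x) f) (at z) h * dderiv (snd x) g z)) (at z)"
    proof (rule has_derivative_sum_list)
      fix pq assume that: "pq \<in> set (splits ds)"
      obtain p q where pq: "pq = (p, q)" by fastforce
      have "set p \<subseteq> set ds" "set q \<subseteq> set ds" using splits_props that pq by blast+
      then have "p \<in> lists Basis" "q \<in> lists Basis" using ds by auto
      then show "((\<lambda>z. dderiv (fst pq) f z * dderiv (snd pq) g z) has_derivative
          (\<lambda>h. dderiv (fst pq) f z * frechet_derivative (dderiv (snd pq) g) (at z) h
                  + frechet_derivative (dderiv (fst pq) f) (at z) h * dderiv (snd pq) g z)) (at z)"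
        unfolding pq fst_conv snd_conv
        using has_derivative_mult[OF dderiv_Cons_works[OF assms(1), of p z] dderiv_Cons_works[OF assms(2), of q z]] by simp
    qed
    then show ?thesis unfolding differentiable_def by blast
  qed
  then show "dderiv ds (\<lambda>z. f z * g z) differentiable at z"
    unfolding dderiv_mult[OF assms ds] by (simp add: case_prod_beta')
qed


lemma integrable_cont_supp:
  fixes F :: "'a::euclidean_space \<Rightarrow> 'b::{banach, second_countable_topology}"
  assumes "continuous_on UNIV F" "\<And>z. norm z > R \<Longrightarrow> F z = 0"
  shows "integrable lborel F"
proof -
  have "integrable lborel (\<lambda>x. indicator (cball 0 R) x *\<^sub>R F x)"
    by (rule borel_integrable_compact) (auto intro: continuous_on_subset[OF assms(1)])
  moreover have "(\<lambda>x. indicator (cball 0 R) x *\<^sub>R F x) = F"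
    using assms(2) by (auto simp: indicator_def fun_eq_iff not_le)
  ultimately show ?thesis by simp
qed

lemma integral_translate:
  fixes F :: "'a::euclidean_space \<Rightarrow> 'b::{banach, second_countable_topology}"
  assumes "F \<in> borel_measurable borel"
  shows "integral\<^sup>L lborel (\<lambda>z. F (z + c)) = integral\<^sup>L lborel F"
proof -
  have "integral\<^sup>L lborel F = integral\<^sup>L (distr lborel borel ((+) c)) F"
    by (simp add: lborel_distr_plus)
  also have "\<dots> = integral\<^sup>L lborel (\<lambda>z. F (c + z))"
    by (rule integral_distr) (auto simp: assms)
  finally show ?thesis by (simp add: add.commute)
qed

lemma ibp_zero:
  fixes F :: "'a::euclidean_space \<Rightarrow> complex"
  assumes dF: "\<And>z. (F has_derivative F' z) (at z)"
    and cont: "continuous_on UNIV (\<lambda>z. F' z e)"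
    and supp: "\<And>z. norm z \<ge> R \<Longrightarrow> F z = 0"
    and R: "R \<ge> 0"
    and e: "norm e = 1"
  shows "integral\<^sup>L lborel (\<lambda>z. F' z e) = 0"
proof -
  have contF: "continuous_on UNIV F"
    using dF by (meson continuous_at_imp_continuous_on has_derivative_continuous)
  have measF: "F \<in> borel_measurable borel" using contF by (rule borel_measurable_continuous_onI)
  have measF': "(\<lambda>z. F' z e) \<in> borel_measurable borel" using cont by (rule borel_measurable_continuous_onI)
  have intF: "integrable lborel F"
    by (rule integrable_cont_supp[OF contF, of R]) (auto intro: supp)
  obtain B where B: "\<And>z. z \<in> cball 0 (R + 2) \<Longrightarrow> norm (F' z e) \<le> B"
  proof -
    have "compact ((\<lambda>z. F' z e) ` cball 0 (R + 2))"
      by (rule compact_continuous_image) (auto intro: continuous_on_subset[OF cont])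
    then have "bounded ((\<lambda>z. F' z e) ` cball 0 (R + 2))" by (rule compact_imp_bounded)
    then show ?thesis using that unfolding bounded_iff by blast
  qed
  define s where "s n = 1 / real (Suc n)" for n
  have s_pos: "s n > 0" "s n \<le> 1" for n unfolding s_def by auto
  define q where "q n z = real (Suc n) *\<^sub>R (F (z + s n *\<^sub>R e) - F z)" for n z
  have far: "norm (z + s n *\<^sub>R e) \<ge> R" if "norm z > R + 1" for n z
    using norm_triangle_ineq2[of z "- (s n *\<^sub>R e)"] s_pos[of n] e that by simp
  have q_int: "integral\<^sup>L lborel (q n) = 0" for n
  proof -
    have i2: "integrable lborel (\<lambda>z. F (z + s n *\<^sub>R e))"
      by (rule integrable_cont_supp[of _ "R + 1"])
         (auto intro!: continuous_on_compose2[OF contF] continuous_intros supp far)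
    show ?thesis
      unfolding q_def
      using integral_translate[OF measF, of "s n *\<^sub>R e"] i2 intF by simp
  qed
  have lim: "(\<lambda>n. q n z) \<longlonglongrightarrow> F' z e" for z
  proof -
    have "bounded_linear (F' z) \<and> ((\<lambda>h. norm (F (z + h) - F z - F' z h) / norm h) \<longlongrightarrow> 0) (at 0)"
      using dF[of z] unfolding has_derivative_at by simp
    then have bl: "bounded_linear (F' z)" and t0: "((\<lambda>h. norm (F (z + h) - F z - F' z h) / norm h) \<longlongrightarrow> 0) (at 0)"
      by auto
    have sl: "filterlim (\<lambda>n. s n *\<^sub>R e) (at 0) sequentially"
    proof (subst filterlim_at, intro conjI)
      show "\<forall>\<^sub>F n in sequentially. s n *\<^sub>R e \<in> UNIV \<and> s n *\<^sub>R e \<noteq> 0"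
      proof (rule always_eventually, intro allI conjI)
        fix n show "s n *\<^sub>R e \<in> UNIV" by simp
        have "e \<noteq> 0" using e by auto
        then show "s n *\<^sub>R e \<noteq> 0" using s_pos[of n] by simp
      qed
      have "s \<longlonglongrightarrow> 0" unfolding s_def by (rule LIMSEQ_Suc[OF lim_const_over_n]) 
      then show "(\<lambda>n. s n *\<^sub>R e) \<longlonglongrightarrow> 0" using tendsto_scaleR[OF _ tendsto_const, of s 0 _ e] by simp
    qed
    have "(\<lambda>n. norm (F (z + s n *\<^sub>R e) - F z - F' z (s n *\<^sub>R e)) / norm (s n *\<^sub>R e)) \<longlonglongrightarrow> 0"
      using filterlim_compose[OF t0 sl] by (simp add: o_def)
    moreover have "norm (F (z + s n *\<^sub>R e) - F z - F' z (s n *\<^sub>R e)) / norm (s n *\<^sub>R e) = norm (q n z - F' z e)" for n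
    proof -
      have "F' z (s n *\<^sub>R e) = s n *\<^sub>R F' z e" using bl by (simp add: linear_simps)
      moreover have "real (Suc n) * s n = 1" unfolding s_def by simp
      ultimately have "q n z - F' z e = real (Suc n) *\<^sub>R (F (z + s n *\<^sub>R e) - F z - F' z (s n *\<^sub>R e))"
        unfolding q_def by (simp add: algebra_simps scaleR_diff_right)
      then have "norm (q n z - F' z e) = real (Suc n) * norm (F (z + s n *\<^sub>R e) - F z - F' z (s n *\<^sub>R e))"
        by simp
      moreover have "norm (s n *\<^sub>R e) = s n" using s_pos[of n] e by simp
      ultimately show ?thesis unfolding s_def by (simp add: field_simps)
    qed
    ultimately have "(\<lambda>n. norm (q n z - F' z e)) \<longlonglongrightarrow> 0" by simp
    then show ?thesis by (simp add: tendsto_norm_zero_iff LIM_zero_iff)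
  qed
  have dom: "norm (q n z) \<le> B * indicator (cball 0 (R + 1)) z" for n z
  proof (cases "norm z \<le> R + 1")
    case False
    then have "norm (z + s n *\<^sub>R e) \<ge> R" using far by simp
    then show ?thesis using False supp[of z] supp[of "z + s n *\<^sub>R e"] unfolding q_def by simp
  next
    case True
    define g where "g t = F (z + t *\<^sub>R e)" for t
    have gd: "(g has_derivative (\<lambda>h. F' (z + t *\<^sub>R e) (h *\<^sub>R e))) (at t)" for t
    proof -
      have "((\<lambda>t. z + t *\<^sub>R e) has_derivative (\<lambda>h. h *\<^sub>R e)) (at t)"
        by (auto intro!: derivative_eq_intros)
      from has_derivative_compose[OF this dF] show ?thesis by (simp add: g_def[abs_def] o_def)
    qed
    have gc: "continuous_on {0..s n} g"
      unfolding g_def by (auto intro!: continuous_on_compose2[OF contF] continuous_intros)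
    obtain t where t: "t \<in> {0<..<s n}" and mv: "norm (g (s n) - g 0) \<le> norm (F' (z + t *\<^sub>R e) ((s n - 0) *\<^sub>R e))"
      using mvt_general[OF s_pos(1) gc gd] by blast
    have lin: "F' (z + t *\<^sub>R e) ((s n - 0) *\<^sub>R e) = s n *\<^sub>R F' (z + t *\<^sub>R e) e"
      using dF[of "z + t *\<^sub>R e"] has_derivative_linear linear_scale by fastforce
    have "norm (z + t *\<^sub>R e) \<le> R + 2"
      using norm_triangle_ineq[of z "t *\<^sub>R e"] True t s_pos[of n] e by auto
    then have "norm (F' (z + t *\<^sub>R e) e) \<le> B" using B by simp
    then have "s n * norm (F' (z + t *\<^sub>R e) e) \<le> s n * B" using s_pos[of n] by (simp add: mult_left_mono)
    moreover have "norm (g (s n) - g 0) \<le> s n * norm (F' (z + t *\<^sub>R e) e)" using mv lin s_pos[of n] by simp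
    ultimately have "norm (g (s n) - g 0) \<le> s n * B" by linarith
    then have "norm (q n z) \<le> real (Suc n) * (s n * B)"
      unfolding q_def g_def by simp
    also have "\<dots> = B" unfolding s_def by simp
    finally show ?thesis using True by simp
  qed
  have "(\<lambda>n. integral\<^sup>L lborel (q n)) \<longlonglongrightarrow> integral\<^sup>L lborel (\<lambda>z. F' z e)"
  proof (rule integral_dominated_convergence[where w = "\<lambda>z. B * indicator (cball 0 (R + 1)) z"])
    show "(\<lambda>z. F' z e) \<in> borel_measurable lborel" using measF' by simp
    show "q n \<in> borel_measurable lborel" for n
      unfolding q_def by (auto intro!: borel_measurable_continuous_onI continuous_intros continuous_on_compose2[OF contF])
    show "integrable lborel (\<lambda>z. B * indicator (cball 0 (R + 1)) z)"
      by (intro integrable_mult_right integrable_real_indicator) (auto simp: emeasure_bounded_finite[OF bounded_cball, simplified])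
    show "AE z in lborel. (\<lambda>n. q n z) \<longlonglongrightarrow> F' z e" using lim by simp
    show "AE z in lborel. norm (q n z) \<le> B * indicator (cball 0 (R + 1)) z" for n using dom by simp
  qed
  then show ?thesis using q_int LIMSEQ_unique[OF _ tendsto_const] by simp
qed


definition Psi :: "'a::euclidean_space \<Rightarrow> 'a \<Rightarrow> complex" where
  "Psi W z = exp (\<i> * complex_of_real (W \<bullet> z))"

lemma Psi_deriv:
  "(Psi W has_derivative (\<lambda>h. Psi W z * (\<i> * complex_of_real (W \<bullet> h)))) (at z)"
proof -
  have "(Psi W has_derivative (\<lambda>h. \<i> * complex_of_real (W \<bullet> h) * Psi W z)) (at z)"
  proof -
    have bl: "bounded_linear (\<lambda>h. \<i> * complex_of_real (W \<bullet> h))"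
      by (intro bounded_linear_compose[OF bounded_linear_mult_right[of \<i>]]
          bounded_linear_compose[OF bounded_linear_of_real] bounded_linear_inner_right)
    have d1: "((\<lambda>h. \<i> * complex_of_real (W \<bullet> h)) has_derivative (\<lambda>h. \<i> * complex_of_real (W \<bullet> h))) (at z)"
      using bl by (rule bounded_linear_imp_has_derivative)
    have d2: "(exp has_derivative (\<lambda>x. exp (\<i> * complex_of_real (W \<bullet> z)) * x)) (at (\<i> * complex_of_real (W \<bullet> z)))"
      using has_field_derivative_imp_has_derivative[OF DERIV_exp] .
    show ?thesis using has_derivative_compose[OF d1 d2] unfolding Psi_def by (simp add: o_def mult.commute)
  qed
  then show ?thesis by (simp add: mult.commute)
qed

lemma Psi_cont: "continuous_on UNIV (Psi W)"
  unfolding Psi_def by (intro continuous_intros)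

lemma norm_Psi[simp]: "norm (Psi W z) = 1"
  unfolding Psi_def by simp

lemma smooth_supp:
  assumes "smooth_fun g" "\<And>z. norm z \<ge> R \<Longrightarrow> g z = 0"
  shows "norm z \<ge> R + 1 \<Longrightarrow> dderiv ds g z = 0"
  by (rule dderiv_local_zero[of "{z. norm z > R}"]) (auto intro: assms(2) open_Collect_less continuous_intros)

lemma ibp_step:
  fixes g :: "'a::euclidean_space \<Rightarrow> complex"
  assumes g: "smooth_fun g" and supp: "\<And>z. norm z \<ge> R \<Longrightarrow> g z = 0" and R: "R \<ge> 0"
    and e: "e \<in> Basis"
  shows "integral\<^sup>L lborel (\<lambda>z. dderiv [e] g z * Psi W z)
       = - (\<i> * complex_of_real (W \<bullet> e)) * integral\<^sup>L lborel (\<lambda>z. g z * Psi W z)"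
proof -
  let ?F' = "\<lambda>z h. g z * (Psi W z * (\<i> * complex_of_real (W \<bullet> h))) + frechet_derivative g (at z) h * Psi W z"
  have dF: "((\<lambda>z. g z * Psi W z) has_derivative ?F' z) (at z)" for z
    using has_derivative_mult[OF dderiv_Cons_works[OF g, of "[]" z] Psi_deriv[of W z]] by simp
  have cg: "continuous_on UNIV g" using smooth_continuous[OF g, of "[]"] by simp
  have cg1: "continuous_on UNIV (dderiv [e] g)" using smooth_continuous[OF g, of "[e]"] e by simp
  have F'e: "?F' z e = dderiv [e] g z * Psi W z + (\<i> * complex_of_real (W \<bullet> e)) * (g z * Psi W z)" for z
    by (simp add: algebra_simps)
  have "continuous_on UNIV (\<lambda>z. ?F' z e)"
    unfolding F'e using cg cg1 by (intro continuous_intros Psi_cont) auto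
  from ibp_zero[OF dF this, where R = R] supp R e
  have "integral\<^sup>L lborel (\<lambda>z. ?F' z e) = 0" by auto
  moreover have i1: "integrable lborel (\<lambda>z. dderiv [e] g z * Psi W z)"
    using cg1 smooth_supp[OF g supp, where ds = "[e]"]
    by (intro integrable_cont_supp[of _ "R + 1"]) (auto intro!: continuous_intros Psi_cont)
  moreover have i2: "integrable lborel (\<lambda>z. g z * Psi W z)"
    using cg supp
    by (intro integrable_cont_supp[of _ "R"]) (auto intro!: continuous_intros Psi_cont)
  ultimately have "integral\<^sup>L lborel (\<lambda>z. dderiv [e] g z * Psi W z)
      + (\<i> * complex_of_real (W \<bullet> e)) * integral\<^sup>L lborel (\<lambda>z. g z * Psi W z) = 0"
    unfolding F'e
    using Bochner_Integration.integral_add[OF i1 integrable_mult_right[OF i2], of "\<i> * complex_of_real (W \<bullet> e)"]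
      integral_mult_right_zero[of lborel "\<i> * complex_of_real (W \<bullet> e)" "\<lambda>z. g z * Psi W z"]
    by simp
  then show ?thesis by (simp add: eq_neg_iff_add_eq_0)
qed

lemma ibp_iter:
  fixes g :: "'a::euclidean_space \<Rightarrow> complex"
  assumes g: "smooth_fun g" and supp: "\<And>z. norm z \<ge> R \<Longrightarrow> g z = 0" and R: "R \<ge> 0"
    and ds: "ds \<in> lists Basis"
  shows "integral\<^sup>L lborel (\<lambda>z. dderiv ds g z * Psi W z)
       = (\<Prod>e\<leftarrow>ds. - (\<i> * complex_of_real (W \<bullet> e))) * integral\<^sup>L lborel (\<lambda>z. g z * Psi W z)"
  using ds
proof (induction ds)
  case Nil then show ?case by simp
next
  case (Cons e ds)
  have ds: "ds \<in> lists Basis" and e: "e \<in> Basis" using Cons by auto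
  have "dderiv (e # ds) g = dderiv [e] (dderiv ds g)" by (simp add: dderiv_append[symmetric])
  then have "integral\<^sup>L lborel (\<lambda>z. dderiv (e # ds) g z * Psi W z)
     = - (\<i> * complex_of_real (W \<bullet> e)) * integral\<^sup>L lborel (\<lambda>z. dderiv ds g z * Psi W z)"
    using ibp_step[OF smooth_dderiv[OF g ds] smooth_supp[OF g supp] _ e, where R = "R + 1" and W = W] R by simp
  then show ?case using Cons.IH by simp
qed


definition Ann :: "nat \<Rightarrow> 'a::real_normed_vector set" where
  "Ann k = {z. (if k = 0 then 0 else 2 ^ (k - 1)) \<le> norm z \<and> norm z \<le> 2 ^ (k + 1)}"

lemma Ann_bounded: "Ann k \<subseteq> cball 0 (2 ^ (k + 1))"
  unfolding Ann_def by auto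

lemma Ann_closed: "closed (Ann k)"
  unfolding Ann_def by (intro closed_Collect_conj closed_Collect_le continuous_intros)

context
  fixes \<phi>0 :: "'a::euclidean_space \<Rightarrow> real"
  assumes LP: "LP_generator \<phi>0"
begin

lemma phi_smooth: "smooth_fun \<phi>0"
  using LP unfolding LP_generator_def by auto

lemma phi_one: "norm z \<le> 1 \<Longrightarrow> \<phi>0 z = 1"
  using LP unfolding LP_generator_def by auto

lemma phi_zero: "norm z \<ge> 2 \<Longrightarrow> \<phi>0 z = 0"
  using LP unfolding LP_generator_def by auto

lemma phi_dbound:
  assumes ds: "ds \<in> lists Basis"
  obtains B where "B \<ge> 0" "\<And>z. norm (dderiv ds \<phi>0 z) \<le> B"
proof -
  have "compact (dderiv ds \<phi>0 ` cball 0 3)"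
    by (rule compact_continuous_image) (auto intro: continuous_on_subset[OF smooth_continuous[OF phi_smooth ds]])
  then have "bounded (dderiv ds \<phi>0 ` cball 0 3)" by (rule compact_imp_bounded)
  then obtain B where B0: "\<forall>y \<in> dderiv ds \<phi>0 ` cball 0 3. norm y \<le> B"
    unfolding bounded_iff by blast
  then have B: "\<And>z. z \<in> cball 0 3 \<Longrightarrow> norm (dderiv ds \<phi>0 z) \<le> B" by blast
  have "norm (dderiv ds \<phi>0 z) \<le> max B 0" for z
  proof (cases "norm z \<le> 3")
    case True then show ?thesis using B[of z] by simp
  next
    case False
    have "dderiv ds \<phi>0 z = 0"
      by (rule dderiv_local_zero[of "{z. norm z > 2}"]) (use False in \<open>auto intro: phi_zero open_Collect_less continuous_intros\<close>)
    then show ?thesis by simp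
  qed
  then show ?thesis using that[of "max B 0"] by simp
qed

lemma piece_eq: "k > 0 \<Longrightarrow> LP_piece \<phi>0 k = (\<lambda>z. \<phi>0 ((1 / 2 ^ k) *\<^sub>R z) - \<phi>0 ((1 / 2 ^ (k - 1)) *\<^sub>R z))"
  unfolding LP_piece_def by auto

lemma piece_smooth: "smooth_fun (LP_piece \<phi>0 k)"
proof (cases "k = 0")
  case True
  then have "LP_piece \<phi>0 k = \<phi>0" unfolding LP_piece_def by auto
  then show ?thesis using phi_smooth by simp
next
  case False
  then have k: "k > 0" by simp
  show ?thesis unfolding piece_eq[OF k]
    by (intro smooth_diff smooth_scale phi_smooth)
qed

lemma piece_supp:
  assumes "z \<notin> Ann k"
  shows "dderiv ds (LP_piece \<phi>0 k) z = 0"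
proof (cases "norm z > 2 ^ (k + 1)")
  case True
  show ?thesis
  proof (rule dderiv_local_zero[of "{z. norm z > 2 ^ (k + 1)}"])
    show "open {z :: 'a. norm z > 2 ^ (k + 1)}" by (intro open_Collect_less continuous_intros)
    show "z \<in> {z. norm z > 2 ^ (k + 1)}" using True by simp
    fix w :: 'a assume w: "w \<in> {z. norm z > 2 ^ (k + 1)}"
    have a: "\<phi>0 ((1 / 2 ^ j) *\<^sub>R w) = 0" if "j \<le> k" for j
    proof (rule phi_zero)
      have h: "(2::real) ^ (j + 1) \<le> 2 ^ (k + 1)" using that by (intro power_increasing) auto
      have w': "norm w > 2 ^ (k + 1)" using w by simp
      have "norm w \<ge> 2 ^ j * 2" using h w' by (simp only: power_Suc2 Suc_eq_plus1[symmetric])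
      then show "norm ((1 / 2 ^ j) *\<^sub>R w) \<ge> 2" by (simp add: field_simps)
    qed
    show "LP_piece \<phi>0 k w = 0"
      unfolding LP_piece_def using a[of k] a[of "k - 1"] by auto
  qed
next
  case False
  then have k: "k > 0" and z: "norm z < 2 ^ (k - 1)" using assms unfolding Ann_def by (auto split: if_splits)
  show ?thesis
  proof (rule dderiv_local_zero[of "{z. norm z < 2 ^ (k - 1)}"])
    show "open {z :: 'a. norm z < 2 ^ (k - 1)}" by (intro open_Collect_less continuous_intros)
    show "z \<in> {z. norm z < 2 ^ (k - 1)}" using z by simp
    fix w :: 'a assume w: "w \<in> {z. norm z < 2 ^ (k - 1)}"
    have a: "\<phi>0 ((1 / 2 ^ j) *\<^sub>R w) = 1" if "k - 1 \<le> j" for j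
    proof (rule phi_one)
      have h: "(2::real) ^ (k - 1) \<le> 2 ^ j" using that by (intro power_increasing) auto
      have w': "norm w < 2 ^ (k - 1)" using w by simp
      have "norm w \<le> 2 ^ j" using h w' by linarith
      then show "norm ((1 / 2 ^ j) *\<^sub>R w) \<le> 1" by (simp add: field_simps)
    qed
    show "LP_piece \<phi>0 k w = 0"
      unfolding LP_piece_def using a[of k] a[of "k - 1"] k by auto
  qed
qed

lemma piece_dbound:
  assumes ds: "ds \<in> lists Basis"
  obtains B where "B \<ge> 0" "\<And>k z. norm (dderiv ds (LP_piece \<phi>0 k) z) \<le> B * (1 / 2 ^ k) ^ length ds * indicator (Ann k) z"
proof -
  obtain B where B0: "B \<ge> 0" and B: "\<And>z. norm (dderiv ds \<phi>0 z) \<le> B" using phi_dbound[OF ds] by blast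
  define L where "L = length ds"
  have "norm (dderiv ds (LP_piece \<phi>0 k) z) \<le> ((1 + 2 ^ L) * B) * (1 / 2 ^ k) ^ L * indicator (Ann k) z" for k z
  proof (cases "z \<in> Ann k")
    case False then show ?thesis using piece_supp by simp
  next
    case True
    show ?thesis
    proof (cases "k = 0")
      case True
      then have pe: "LP_piece \<phi>0 k = \<phi>0" unfolding LP_piece_def by auto
      have "B \<le> (1 + 2 ^ L) * B" using mult_right_mono[of 1 "1 + 2 ^ L" B] B0 by simp
      then show ?thesis using B[of z] \<open>z \<in> Ann k\<close> True pe by simp
    next
      case False
      then have k: "k > 0" by simp
      define c :: real where "c = 1 / 2 ^ k"
      have c2: "1 / 2 ^ (k - 1) = 2 * c"
      proof -
        have "(2::real) ^ k = 2 * 2 ^ (k - 1)" using k by (cases k) auto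
        then show ?thesis unfolding c_def by (simp add: field_simps)
      qed
      have "dderiv ds (LP_piece \<phi>0 k) z = c ^ L *\<^sub>R dderiv ds \<phi>0 (c *\<^sub>R z)
           - (2 * c) ^ L *\<^sub>R dderiv ds \<phi>0 ((2 * c) *\<^sub>R z)"
        unfolding piece_eq[OF k] dderiv_diff[OF smooth_scale[OF phi_smooth] smooth_scale[OF phi_smooth] ds]
          dderiv_scale[OF phi_smooth ds] L_def c_def
        using c2 unfolding c_def by simp
      also have "norm \<dots> \<le> c ^ L * B + (2 * c) ^ L * B"
        using B[of "c *\<^sub>R z"] B[of "(2 * c) *\<^sub>R z"]
        by (intro order_trans[OF norm_triangle_ineq4] add_mono) (auto simp: c_def abs_mult intro!: mult_left_mono)
      also have "\<dots> = (1 + 2 ^ L) * B * c ^ L" by (simp add: power_mult_distrib algebra_simps)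
      finally show ?thesis using True unfolding c_def by simp
    qed
  qed
  then show ?thesis using that[of "(1 + 2 ^ L) * B"] B0 L_def by simp
qed

end


lemma jbr_pos: "jbr z > 0"
  unfolding jbr_def by (simp add: add_pos_nonneg)

lemma jbr_nz: "jbr z \<noteq> 0"
  using jbr_pos[of z] by linarith

lemma jbr_ge1: "jbr z \<ge> 1"
  unfolding jbr_def by simp

lemma jbr_ge_norm: "jbr z \<ge> norm z"
  unfolding jbr_def by (simp add: real_le_rsqrt)

lemma jbr_le: "jbr z \<le> 1 + norm z"
proof -
  have "1 + (norm z)\<^sup>2 \<le> (1 + norm z)\<^sup>2" by (simp add: power2_eq_square algebra_simps)
  then show ?thesis unfolding jbr_def by (simp add: real_sqrt_le_iff real_sqrt_le_mono[THEN order_trans] )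
qed

lemma jbr_cont: "continuous_on UNIV (\<lambda>z. jbr z powr s)"
proof -
  have "continuous_on UNIV jbr" unfolding jbr_def[abs_def] by (intro continuous_intros)
  then show ?thesis by (intro continuous_on_powr continuous_intros) (auto simp: jbr_nz)
qed

lemma phase_Psi: "phase x Y \<Xi> = Psi (\<chi> j. x - Y $ j) \<Xi>"
proof -
  have "(\<chi> j. x - Y $ j) \<bullet> \<Xi> = (\<Sum>j\<in>UNIV. (x - Y $ j) \<bullet> \<Xi> $ j)"
    unfolding inner_vec_def by simp
  then have "\<i> * complex_of_real ((\<chi> j. x - Y $ j) \<bullet> \<Xi>) = (\<Sum>j\<in>UNIV. \<i> * complex_of_real ((x - Y $ j) \<bullet> \<Xi> $ j))"
    by (simp add: sum_distrib_left)
  then show ?thesis unfolding phase_def Psi_def by (simp add: exp_sum)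
qed

lemma closed_dense_univ:
  assumes "closed S" "D \<subseteq> S" "\<forall>X. open X \<longrightarrow> X \<noteq> {} \<longrightarrow> (\<exists>d\<in>D. d \<in> X)"
  shows "S = UNIV"
proof (rule ccontr)
  assume "S \<noteq> UNIV"
  then obtain z where "z \<notin> S" by auto
  then have "open (- S)" "- S \<noteq> {}" using assms(1) by auto
  then obtain d where "d \<in> D" "d \<in> - S" using assms(3) by blast
  then show False using assms(2) by auto
qed

lemma good_x:
  fixes a :: "real^'n \<Rightarrow> (real^'n)^'N \<Rightarrow> complex"
  assumes "LinfS m \<rho> a"
  obtains C where "AE x in lborel. smooth_fun (a x) \<and>
     (\<forall>ds \<in> lists Basis. \<forall>\<Xi>. norm (dderiv ds (a x) \<Xi>) \<le> C ds * jbr \<Xi> powr (m - \<rho> * real (length ds)))"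
proof -
  have sm: "AE x in lborel. smooth_fun (a x)" and
    bd: "\<forall>ds \<in> lists Basis. \<exists>C. \<forall>\<Xi>. AE x in lborel. norm (dderiv ds (a x) \<Xi>) \<le> C * jbr \<Xi> powr (m - \<rho> * real (length ds))"
    using assms unfolding LinfS_def by auto
  from bchoice[OF bd] obtain C where C: "\<forall>ds \<in> lists Basis. \<forall>\<Xi>. AE x in lborel. norm (dderiv ds (a x) \<Xi>) \<le> C ds * jbr \<Xi> powr (m - \<rho> * real (length ds))"
    by blast
  obtain D :: "((real^'n)^'N) set" where D: "countable D" "\<forall>X. open X \<longrightarrow> X \<noteq> {} \<longrightarrow> (\<exists>d\<in>D. d \<in> X)"
    using countable_dense_exists by blast
  have cl: "countable (lists (Basis :: ((real^'n)^'N) set))"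
    by (intro countable_lists countable_finite finite_Basis)
  have "AE x in lborel. \<forall>ds \<in> lists Basis. \<forall>\<Xi>\<in>D. norm (dderiv ds (a x) \<Xi>) \<le> C ds * jbr \<Xi> powr (m - \<rho> * real (length ds))"
    using C by (simp add: AE_ball_countable[OF cl] AE_ball_countable[OF D(1)])
  then have "AE x in lborel. smooth_fun (a x) \<and>
     (\<forall>ds \<in> lists Basis. \<forall>\<Xi>. norm (dderiv ds (a x) \<Xi>) \<le> C ds * jbr \<Xi> powr (m - \<rho> * real (length ds)))"
    using sm
  proof eventually_elim
    case (elim x)
    have "\<forall>\<Xi>. norm (dderiv ds (a x) \<Xi>) \<le> C ds * jbr \<Xi> powr (m - \<rho> * real (length ds))" if ds: "ds \<in> lists Basis" for ds
    proof -
      let ?S = "{\<Xi>. norm (dderiv ds (a x) \<Xi>) \<le> C ds * jbr \<Xi> powr (m - \<rho> * real (length ds))}"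
      have "closed ?S"
        by (intro closed_Collect_le continuous_intros jbr_cont continuous_on_norm smooth_continuous[OF elim(2) ds])
      moreover have "D \<subseteq> ?S" using elim(1) ds by auto
      ultimately have "?S = UNIV" using D(2) by (rule closed_dense_univ)
      then show ?thesis by auto
    qed
    then show ?case using elim(2) by auto
  qed
  then show ?thesis using that by blast
qed


lemma norm_sum_list_le: "norm (\<Sum>x\<leftarrow>xs. f x) \<le> (\<Sum>x\<leftarrow>xs. norm (f x))"
  by (induction xs) (auto intro: order_trans[OF norm_triangle_ineq])

lemma jbr_Ann:
  assumes "z \<in> Ann k"
  shows "jbr z powr s \<le> 4 powr \<bar>s\<bar> * 2 powr (real k * s)"
proof -
  have lo: "2 ^ k / 2 \<le> jbr z"
  proof (cases "k = 0")
    case True then show ?thesis using jbr_ge1[of z] by simp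
  next
    case False
    then have "(2::real) ^ k / 2 = 2 ^ (k - 1)" by (cases k) auto
    also have "\<dots> \<le> norm z" using assms False unfolding Ann_def by auto
    finally show ?thesis using jbr_ge_norm[of z] by linarith
  qed
  have up: "jbr z \<le> 4 * 2 ^ k"
  proof -
    have "norm z \<le> 2 * 2 ^ k" using assms unfolding Ann_def by auto
    moreover have "(1::real) \<le> 2 ^ k" by simp
    ultimately show ?thesis using jbr_le[of z] by linarith
  qed
  have p2: "((2::real) ^ k) powr s = 2 powr (real k * s)"
  proof -
    have "(2::real) ^ k = 2 powr real k" using powr_realpow[of 2 k] by simp
    then show ?thesis by (simp add: powr_powr)
  qed
  show ?thesis
  proof (cases "s \<ge> 0")
    case True
    then have "jbr z powr s \<le> (4 * 2 ^ k) powr s" using up jbr_pos[of z] by (intro powr_mono2) auto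
    also have "\<dots> = 4 powr s * 2 powr (real k * s)" by (simp add: powr_mult p2)
    finally show ?thesis using True by simp
  next
    case False
    then have "jbr z powr s \<le> (2 ^ k / 2) powr s" using lo by (intro powr_mono2') auto
    also have "\<dots> = 2 powr (- s) * 2 powr (real k * s)"
      by (simp add: powr_divide p2 powr_minus_divide)
    also have "\<dots> \<le> 4 powr (- s) * 2 powr (real k * s)"
      using False by (intro mult_right_mono powr_mono2) auto
    finally show ?thesis using False by simp
  qed
qed

locale est =
  fixes \<phi>0 :: "'a::euclidean_space \<Rightarrow> real" and m \<rho> :: real
    and C :: "'a list \<Rightarrow> real" and Bq :: "'a list \<Rightarrow> real"
  assumes LP: "LP_generator \<phi>0" and rho: "0 \<le> \<rho>" "\<rho> \<le> 1"
    and Bq: "\<And>q. q \<in> lists Basis \<Longrightarrow> Bq q \<ge> 0"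
       "\<And>q k z. q \<in> lists Basis \<Longrightarrow> norm (dderiv q (LP_piece \<phi>0 k) z) \<le> Bq q * (1 / 2 ^ k) ^ length q * indicator (Ann k) z"
begin

definition Ed :: "'a list \<Rightarrow> real" where
  "Ed ds = (\<Sum>(p, q)\<leftarrow>splits ds. \<bar>C p\<bar> * Bq q * 4 powr \<bar>m - \<rho> * real (length p)\<bar>)"

lemma Ed_nonneg: "ds \<in> lists Basis \<Longrightarrow> Ed ds \<ge> 0"
  unfolding Ed_def
proof (rule sum_list_nonneg)
  fix x assume ds: "ds \<in> lists Basis" and x: "x \<in> set (map (\<lambda>(p, q). \<bar>C p\<bar> * Bq q * 4 powr \<bar>m - \<rho> * real (length p)\<bar>) (splits ds))"
  then obtain p q where pq: "(p, q) \<in> set (splits ds)" and xe: "x = \<bar>C p\<bar> * Bq q * 4 powr \<bar>m - \<rho> * real (length p)\<bar>" by auto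
  have "q \<in> lists Basis" using splits_props[OF pq] ds by auto
  then show "0 \<le> x" unfolding xe using Bq(1) by simp
qed

lemma piece_c_smooth: "smooth_fun (\<lambda>z. complex_of_real (LP_piece \<phi>0 k z))"
  by (rule smooth_linear[OF bounded_linear_of_real piece_smooth[OF LP]])

lemma piece_c_dderiv: "q \<in> lists Basis \<Longrightarrow> dderiv q (\<lambda>z. complex_of_real (LP_piece \<phi>0 k z)) = (\<lambda>z. complex_of_real (dderiv q (LP_piece \<phi>0 k) z))"
  by (rule dderiv_linear[OF bounded_linear_of_real piece_smooth[OF LP]])

lemma deriv_est:
  fixes f :: "'a \<Rightarrow> complex"
  assumes f: "smooth_fun f"
    and fb: "\<forall>ds \<in> lists Basis. \<forall>\<Xi>. norm (dderiv ds f \<Xi>) \<le> C ds * jbr \<Xi> powr (m - \<rho> * real (length ds))"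
    and ds: "ds \<in> lists Basis"
  shows "norm (dderiv ds (\<lambda>z. f z * complex_of_real (LP_piece \<phi>0 k z)) \<Xi>)
          \<le> Ed ds * 2 powr (real k * (m - \<rho> * real (length ds))) * indicator (Ann k) \<Xi>"
proof -
  let ?T = "2 powr (real k * (m - \<rho> * real (length ds))) * indicator (Ann k) \<Xi>"
  have "dderiv ds (\<lambda>z. f z * complex_of_real (LP_piece \<phi>0 k z)) \<Xi>
      = (\<Sum>(p, q)\<leftarrow>splits ds. dderiv p f \<Xi> * dderiv q (\<lambda>z. complex_of_real (LP_piece \<phi>0 k z)) \<Xi>)"
    unfolding dderiv_mult[OF f piece_c_smooth ds] ..
  also have "norm \<dots> \<le> (\<Sum>(p, q)\<leftarrow>splits ds. norm (dderiv p f \<Xi> * dderiv q (\<lambda>z. complex_of_real (LP_piece \<phi>0 k z)) \<Xi>))"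
    using norm_sum_list_le[of "\<lambda>pq. dderiv (fst pq) f \<Xi> * dderiv (snd pq) (\<lambda>z. complex_of_real (LP_piece \<phi>0 k z)) \<Xi>" "splits ds"]
    by (simp add: case_prod_beta')
  also have "\<dots> \<le> (\<Sum>(p, q)\<leftarrow>splits ds. (\<bar>C p\<bar> * Bq q * 4 powr \<bar>m - \<rho> * real (length p)\<bar>) * ?T)"
  proof (rule sum_list_mono, clarify)
    fix p q assume pq: "(p, q) \<in> set (splits ds)"
    have pl: "p \<in> lists Basis" and ql: "q \<in> lists Basis" and len: "length p + length q = length ds"
      using splits_props[OF pq] ds by auto
    let ?sp = "m - \<rho> * real (length p)"
    have n1: "norm (dderiv p f \<Xi>) \<le> \<bar>C p\<bar> * jbr \<Xi> powr ?sp"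
      using fb pl by (meson abs_ge_self mult_right_mono order_trans powr_ge_zero)
    have eq: "norm (dderiv p f \<Xi> * dderiv q (\<lambda>z. complex_of_real (LP_piece \<phi>0 k z)) \<Xi>)
        = norm (dderiv p f \<Xi>) * \<bar>dderiv q (LP_piece \<phi>0 k) \<Xi>\<bar>"
      unfolding piece_c_dderiv[OF ql] by (simp add: norm_mult)
    show "norm (dderiv p f \<Xi> * dderiv q (\<lambda>z. complex_of_real (LP_piece \<phi>0 k z)) \<Xi>)
        \<le> (\<bar>C p\<bar> * Bq q * 4 powr \<bar>m - \<rho> * real (length p)\<bar>) * ?T"
    proof (cases "\<Xi> \<in> Ann k")
      case False
      then show ?thesis unfolding eq using piece_supp[OF LP False] by simp
    next
      case True
      have n2: "\<bar>dderiv q (LP_piece \<phi>0 k) \<Xi>\<bar> \<le> Bq q * (1 / 2 ^ k) ^ length q"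
        using Bq(2)[OF ql, of k \<Xi>] True by simp
      have "(1 / 2 ^ k) ^ length q = 1 / (2::real) ^ (k * length q)"
        by (simp add: power_one_over power_mult)
      also have "\<dots> = 1 / 2 powr (real (k * length q))"
        using powr_realpow[of "2::real" "k * length q"] by simp
      also have "\<dots> = 2 powr (- (real k * real (length q)))"
        by (simp add: powr_minus_divide)
      also have "\<dots> \<le> 2 powr (- (real k * \<rho> * real (length q)))"
        using rho by (intro powr_mono) (auto intro!: mult_right_mono mult_left_le)
      finally have pw: "(1 / 2 ^ k) ^ length q \<le> 2 powr (- (real k * \<rho> * real (length q)))" .
      have n2': "\<bar>dderiv q (LP_piece \<phi>0 k) \<Xi>\<bar> \<le> Bq q * 2 powr (- (real k * \<rho> * real (length q)))"
        using n2 mult_left_mono[OF pw Bq(1)[OF ql]] by linarith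
      have n1': "norm (dderiv p f \<Xi>) \<le> \<bar>C p\<bar> * (4 powr \<bar>?sp\<bar> * 2 powr (real k * ?sp))"
        using n1 mult_left_mono[OF jbr_Ann[OF True, of ?sp] abs_ge_zero[of "C p"]] by linarith
      have "norm (dderiv p f \<Xi>) * \<bar>dderiv q (LP_piece \<phi>0 k) \<Xi>\<bar>
          \<le> (\<bar>C p\<bar> * (4 powr \<bar>?sp\<bar> * 2 powr (real k * ?sp))) * (Bq q * 2 powr (- (real k * \<rho> * real (length q))))"
        using n1' n2' Bq(1)[OF ql] by (intro mult_mono) auto
      also have "\<dots> = (\<bar>C p\<bar> * Bq q * 4 powr \<bar>?sp\<bar>) * (2 powr (real k * ?sp) * 2 powr (- (real k * \<rho> * real (length q))))"
        by (simp add: algebra_simps)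
      also have "2 powr (real k * ?sp) * 2 powr (- (real k * \<rho> * real (length q))) = 2 powr (real k * (m - \<rho> * real (length ds)))"
      proof -
        have "real k * ?sp + - (real k * \<rho> * real (length q)) = real k * (m - \<rho> * real (length ds))"
        proof -
          have "real (length ds) = real (length p) + real (length q)" using len by simp
          then show ?thesis by (simp add: algebra_simps)
        qed
        then show ?thesis by (simp add: powr_add[symmetric])
      qed
      finally show ?thesis unfolding eq using True by simp
    qed
  qed
  also have "\<dots> = Ed ds * ?T"
    unfolding Ed_def by (simp add: case_prod_beta' sum_list_mult_const)
  finally show ?thesis by (simp add: mult.assoc)
qed

end


lemma measure_Ann: "measure lborel (Ann k :: 'a::euclidean_space set) \<le> 4 ^ DIM('a) * 2 powr (real k * real DIM('a))"
proof -
  define r :: real where "r = 2 ^ (k + 1)"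
  have r0: "r \<ge> 0" unfolding r_def by simp
  have sub: "Ann k \<subseteq> cbox (- r *\<^sub>R One) (r *\<^sub>R One :: 'a)"
  proof
    fix z :: 'a assume "z \<in> Ann k"
    then have "norm z \<le> r" unfolding Ann_def r_def by simp
    then have "\<bar>z \<bullet> b\<bar> \<le> r" if "b \<in> Basis" for b
      using Basis_le_norm[OF that, of z] by linarith
    then have "- r \<le> z \<bullet> b \<and> z \<bullet> b \<le> r" if "b \<in> Basis" for b
      using abs_le_iff[of "z \<bullet> b" r] that by auto
    then show "z \<in> cbox (- r *\<^sub>R One) (r *\<^sub>R One)"
      unfolding mem_box by auto
  qed
  have "measure lborel (Ann k :: 'a set) \<le> measure lborel (cbox (- r *\<^sub>R One) (r *\<^sub>R One :: 'a))"
    by (rule measure_mono_fmeasurable[OF sub]) (auto intro: borel_closed Ann_closed fmeasurable_cbox)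
  also have "\<dots> = (2 * r) ^ DIM('a)"
  proof -
    have "\<forall>b\<in>(Basis::'a set). (r *\<^sub>R One - (- r *\<^sub>R One)) \<bullet> b = 2 * r"
      by (auto simp: inner_diff_left inner_add_left)
    then have "(\<Prod>b\<in>(Basis::'a set). (r *\<^sub>R One - (- r *\<^sub>R One)) \<bullet> b) = (2 * r) ^ DIM('a)"
      by (simp add: prod_constant)
    moreover have "\<forall>b\<in>(Basis::'a set). (- r *\<^sub>R One) \<bullet> b \<le> (r *\<^sub>R One) \<bullet> b" using r0 by simp
    ultimately show ?thesis unfolding measure_lborel_cbox_eq by presburger
  qed
  also have "(2 * r) = 4 * 2 ^ k" unfolding r_def by simp
  also have "(4 * (2::real) ^ k) ^ DIM('a) = 4 ^ DIM('a) * 2 powr (real k * real DIM('a))"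
    by (simp add: power_mult_distrib powr_realpow[symmetric] powr_powr power_mult[symmetric] of_nat_mult[symmetric] del: of_nat_mult)
  finally show ?thesis .
qed

context est
begin

lemma int_est:
  fixes f :: "'a \<Rightarrow> complex"
  assumes f: "smooth_fun f"
    and fb: "\<forall>ds \<in> lists Basis. \<forall>\<Xi>. norm (dderiv ds f \<Xi>) \<le> C ds * jbr \<Xi> powr (m - \<rho> * real (length ds))"
    and ds: "ds \<in> lists Basis"
  shows "norm (integral\<^sup>L lborel (\<lambda>z. dderiv ds (\<lambda>z. f z * complex_of_real (LP_piece \<phi>0 k z)) z * Psi W z))
     \<le> Ed ds * 4 ^ DIM('a) * 2 powr (real k * (m - \<rho> * real (length ds) + real DIM('a)))"
proof -
  let ?g = "\<lambda>z. f z * complex_of_real (LP_piece \<phi>0 k z)"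
  let ?h = "\<lambda>z. dderiv ds ?g z * Psi W z"
  let ?T = "2 powr (real k * (m - \<rho> * real (length ds)))"
  have gs: "smooth_fun ?g" by (rule smooth_mult[OF f piece_c_smooth])
  have bd: "norm (?h z) \<le> Ed ds * ?T * indicator (Ann k) z" for z
    using deriv_est[OF f fb ds, of k z] by (simp add: norm_mult)
  have supp: "?h z = 0" if "norm z > 2 ^ (k + 1)" for z
  proof -
    have "z \<notin> Ann k" using that unfolding Ann_def by auto
    then show ?thesis using bd[of z] by simp
  qed
  have ih: "integrable lborel ?h"
    by (rule integrable_cont_supp[OF _ supp]) (intro continuous_intros Psi_cont smooth_continuous[OF gs ds])
  have ib: "integrable lborel (\<lambda>z::'a. Ed ds * ?T * indicator (Ann k) z :: real)"
    by (intro integrable_mult_right integrable_real_indicator)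
       (auto intro: borel_closed Ann_closed emeasure_bounded_finite[OF bounded_subset[OF bounded_cball Ann_bounded], simplified])
  have "norm (integral\<^sup>L lborel ?h) \<le> integral\<^sup>L lborel (\<lambda>z. norm (?h z))"
    by (rule integral_norm_bound)
  also have "\<dots> \<le> integral\<^sup>L lborel (\<lambda>z::'a. Ed ds * ?T * indicator (Ann k) z)"
    proof (rule integral_mono[where M=lborel])
    show "integrable lborel (\<lambda>z. norm (?h z))" using ih by (rule integrable_norm)
    show "integrable lborel (\<lambda>z::'a. Ed ds * ?T * indicator (Ann k) z :: real)" by (rule ib)
    show "norm (?h z) \<le> Ed ds * ?T * indicator (Ann k) z" for z by (rule bd)
  qed
  also have "\<dots> = Ed ds * ?T * measure lborel (Ann k :: 'a set)"
    by simp
  also have "\<dots> \<le> Ed ds * ?T * (4 ^ DIM('a) * 2 powr (real k * real DIM('a)))"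
    using Ed_nonneg[OF ds] by (intro mult_left_mono measure_Ann) auto
  also have "\<dots> = Ed ds * 4 ^ DIM('a) * 2 powr (real k * (m - \<rho> * real (length ds) + real DIM('a)))"
    by (simp add: powr_add[symmetric] algebra_simps)
  finally show ?thesis .
qed

end


lemma prod_list_concat_rep:
  "prod_list (map h (concat (map (\<lambda>j. replicate (M j) (e j)) xs))) = prod_list (map (\<lambda>j. h (e j) ^ M j) xs)"
  by (induction xs) auto

lemma length_concat_rep:
  "length (concat (map (\<lambda>j. replicate (M j) (e j)) xs)) = sum_list (map M xs)"
  by (induction xs) auto

lemma set_concat_rep:
  "set (concat (map (\<lambda>j. replicate (M j) (e j)) xs)) \<subseteq> e ` set xs"
  by (induction xs) auto

lemma big_coord:
  fixes v :: "real^'n"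
  obtains i where "norm v \<le> real CARD('n) * \<bar>v $ i\<bar>"
proof -
  obtain i where i: "\<forall>j. \<bar>v $ j\<bar> \<le> \<bar>v $ i\<bar>"
  proof -
    have "finite ((\<lambda>j. \<bar>v $ j\<bar>) ` UNIV)" by simp
    then have "Max ((\<lambda>j. \<bar>v $ j\<bar>) ` UNIV) \<in> (\<lambda>j. \<bar>v $ j\<bar>) ` UNIV" by (intro Max_in) auto
    then obtain i where "\<bar>v $ i\<bar> = Max ((\<lambda>j. \<bar>v $ j\<bar>) ` UNIV)" by (metis (no_types, lifting) imageE)
    then show ?thesis using that by (metis Max_ge UNIV_I finite finite_imageI image_eqI)
  qed
  have "norm v \<le> (\<Sum>j\<in>UNIV. \<bar>v $ j\<bar>)" by (rule norm_le_l1_cart)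
  also have "\<dots> \<le> (\<Sum>j\<in>(UNIV::'n set). \<bar>v $ i\<bar>)" using i by (intro sum_mono) auto
  also have "\<dots> = real CARD('n) * \<bar>v $ i\<bar>" by simp
  finally show ?thesis using that by blast
qed


lemma norm_prod_list_c: "norm (\<Prod>x\<leftarrow>xs. f x) = (\<Prod>x\<leftarrow>xs. norm (f x :: complex))"
  by (induction xs) (auto simp: norm_mult)

lemma final_bound:
  fixes P Q nnL E r :: real
  assumes "P > 0" "Q > 0" "P \<ge> Q / nnL" "nnL > 0" "E \<ge> 0" "r < 1"
  shows "E / P / (1 - r) \<le> nnL * E / (1 - r) * (1 / Q)"
proof -
  have "1 / P \<le> nnL / Q" using assms by (simp add: field_simps)
  then have "E * (1 / P) \<le> E * (nnL / Q)" using assms(5) by (rule mult_left_mono)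
  then have "E * (1 / P) / (1 - r) \<le> E * (nnL / Q) / (1 - r)" using assms(6) by (intro divide_right_mono) auto
  then show ?thesis by (simp add: field_simps)
qed

theorem corollary3p2:
  fixes a :: "real^'n \<Rightarrow> (real^'n)^'N \<Rightarrow> complex"
    and m \<rho> :: real
    and \<phi>0 :: "(real^'n)^'N \<Rightarrow> real"
    and Nexp :: "'N \<Rightarrow> real"
  assumes "0 \<le> \<rho>" "\<rho> \<le> 1"
    and "LinfS m \<rho> a"
    and "\<rho> > 0 \<or> (\<rho> = 0 \<and> m < - real (CARD('n) * CARD('N)))"
    and "LP_generator \<phi>0"
    and "\<forall>j. Nexp j \<ge> 0"
  shows "\<exists>C. AE x in lborel. \<forall>Y. far_set x Y \<noteq> {} \<longrightarrow>
           summable (K_piece a \<phi>0 x Y) \<and>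
           norm (K_osc a \<phi>0 x Y) \<le> C * (\<Prod>j\<in>far_set x Y. norm (x - Y $ j) powr (- Nexp j))"
proof -
  let ?d = "CARD('n) * CARD('N)"
  have dim: "DIM((real^'n)^'N) = ?d" by simp
  obtain C where C: "AE x in lborel. smooth_fun (a x) \<and>
     (\<forall>ds \<in> lists Basis. \<forall>\<Xi>. norm (dderiv ds (a x) \<Xi>) \<le> C ds * jbr \<Xi> powr (m - \<rho> * real (length ds)))"
    using good_x[OF assms(3)] by blast
  have "\<forall>q\<in>lists (Basis::((real^'n)^'N) set). \<exists>B. B \<ge> 0 \<and> (\<forall>k z. norm (dderiv q (LP_piece \<phi>0 k) z) \<le> B * (1 / 2 ^ k) ^ length q * indicator (Ann k) z)"
  proof
    fix q :: "((real^'n)^'N) list" assume q: "q \<in> lists Basis"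
    obtain B where "B \<ge> 0" "\<And>k z. norm (dderiv q (LP_piece \<phi>0 k) z) \<le> B * (1 / 2 ^ k) ^ length q * indicator (Ann k) z"
      using piece_dbound[OF assms(5) q] by blast
    then show "\<exists>B. B \<ge> 0 \<and> (\<forall>k z. norm (dderiv q (LP_piece \<phi>0 k) z) \<le> B * (1 / 2 ^ k) ^ length q * indicator (Ann k) z)"
      by blast
  qed
  from bchoice[OF this] obtain Bq where Bq: "\<forall>q\<in>lists (Basis::((real^'n)^'N) set). Bq q \<ge> 0 \<and> (\<forall>k z. norm (dderiv q (LP_piece \<phi>0 k) z) \<le> Bq q * (1 / 2 ^ k) ^ length q * indicator (Ann k) z)"
    by blast
  interpret E: est \<phi>0 m \<rho> C Bq
    using assms(1,2,5) Bq by unfold_locales auto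
  define M0 :: nat where "M0 = (if \<rho> > 0 then nat \<lceil>(m + real ?d) / \<rho>\<rceil> + 1 else 0)"
  define \<theta> where "\<theta> = m + real ?d - \<rho> * real M0"
  have \<theta>neg: "\<theta> < 0"
  proof (cases "\<rho> > 0")
    case True
    have "(m + real ?d) / \<rho> < real M0"
      unfolding M0_def using True real_nat_ceiling_ge[of "(m + real ?d) / \<rho>"] by simp
    then have "m + real ?d < \<rho> * real M0" using True by (simp add: field_simps)
    then show ?thesis unfolding \<theta>_def by simp
  next
    case False
    then have "\<rho> = 0" "m < - real ?d" using assms(4) by auto
    then show ?thesis unfolding \<theta>_def M0_def by simp
  qed
  define Mj where "Mj j = nat \<lceil>Nexp j\<rceil> + M0" for j
  define L where "L = (\<Sum>j\<in>UNIV. Mj j)"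
  define Dset where "Dset = {ds. set ds \<subseteq> (Basis::((real^'n)^'N) set) \<and> length ds \<le> L}"
  have finD: "finite Dset" unfolding Dset_def by (rule finite_lists_length_le[OF finite_Basis])
  define Etot where "Etot = (\<Sum>ds\<in>Dset. E.Ed ds * 4 ^ ?d)"
  have Etot0: "Etot \<ge> 0" unfolding Etot_def Dset_def
    by (intro sum_nonneg mult_nonneg_nonneg E.Ed_nonneg) auto
  define r :: real where "r = 2 powr \<theta>"
  have r: "0 < r" "r < 1" unfolding r_def using \<theta>neg powr_less_mono[of \<theta> 0 "2::real"] by auto
  define nn :: real where "nn = real CARD('n)"
  have nn1: "nn \<ge> 1" unfolding nn_def by simp
  define Cf where "Cf = nn ^ L * Etot / (1 - r)"
  have "AE x in lborel. \<forall>Y. far_set x Y \<noteq> {} \<longrightarrow>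
           summable (K_piece a \<phi>0 x Y) \<and>
           norm (K_osc a \<phi>0 x Y) \<le> Cf * (\<Prod>j\<in>far_set x Y. norm (x - Y $ j) powr (- Nexp j))"
    using C
  proof eventually_elim
    case (elim x)
    then have ax: "smooth_fun (a x)" and fb: "\<forall>ds \<in> lists Basis. \<forall>\<Xi>. norm (dderiv ds (a x) \<Xi>) \<le> C ds * jbr \<Xi> powr (m - \<rho> * real (length ds))"
      by auto
    show ?case
    proof (intro allI impI)
      fix Y :: "(real^'n)^'N" assume FSne: "far_set x Y \<noteq> {}"
      define FS where "FS = far_set x Y"
      have FS1: "j \<in> FS \<Longrightarrow> norm (x - Y $ j) \<ge> 1" for j unfolding FS_def far_set_def by auto
      define W where "W = (\<chi> j. x - Y $ j)"
      have "\<forall>j. \<exists>i. norm (x - Y $ j) \<le> nn * \<bar>(x - Y $ j) $ i\<bar>"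
        unfolding nn_def using big_coord by metis
      then obtain i where i: "\<And>j. norm (x - Y $ j) \<le> nn * \<bar>(x - Y $ j) $ i j\<bar>" by metis
      define e where "e j = (axis j (axis (i j) (1::real)) :: (real^'n)^'N)" for j
      have eB: "e j \<in> Basis" for j unfolding e_def by (simp add: axis_in_Basis_iff)
      have We: "W \<bullet> e j = (x - Y $ j) $ i j" for j
        unfolding e_def W_def by (simp add: inner_axis)
      obtain xs where xs: "set xs = FS" "distinct xs" using finite_distinct_list[of FS] by auto
      define ds where "ds = concat (map (\<lambda>j. replicate (Mj j) (e j)) xs)"
      have dsB: "ds \<in> lists Basis" using set_concat_rep[of Mj e xs] eB unfolding ds_def by auto
      have lends: "length ds = (\<Sum>j\<in>FS. Mj j)"
        unfolding ds_def length_concat_rep using xs by (simp add: sum_list_distinct_conv_sum_set)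
      have lenL: "length ds \<le> L" unfolding lends L_def by (rule sum_mono2) auto
      have lenM0: "M0 \<le> length ds"
      proof -
        obtain j0 where "j0 \<in> FS" using FSne unfolding FS_def by auto
        then have "Mj j0 \<le> (\<Sum>j\<in>FS. Mj j)" by (intro member_le_sum) auto
        then show ?thesis unfolding lends Mj_def by simp
      qed
      have dsD: "ds \<in> Dset" unfolding Dset_def using dsB lenL by auto
      define P where "P = (\<Prod>j\<in>FS. \<bar>(x - Y $ j) $ i j\<bar> ^ Mj j)"
      have Pprod: "(\<Prod>e'\<leftarrow>ds. norm (- (\<i> * complex_of_real (W \<bullet> e')))) = P"
      proof -
        have nt: "norm (- (\<i> * complex_of_real t)) = \<bar>t\<bar>" for t :: real by (simp add: norm_mult)
        have "(\<Prod>e'\<leftarrow>ds. norm (- (\<i> * complex_of_real (W \<bullet> e')))) = (\<Prod>j\<leftarrow>xs. \<bar>(x - Y $ j) $ i j\<bar> ^ Mj j)"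
          unfolding ds_def prod_list_concat_rep by (simp only: nt We)
        also have "\<dots> = P" unfolding P_def using prod.distinct_set_conv_list[OF xs(2), of "\<lambda>j. \<bar>(x - Y $ j) $ i j\<bar> ^ Mj j"] xs(1) by simp
        finally show ?thesis .
      qed
      have coord_pos: "\<bar>(x - Y $ j) $ i j\<bar> \<ge> norm (x - Y $ j) / nn" for j
        using i[of j] nn1 by (simp add: field_simps)
      have Ppos: "P > 0" unfolding P_def
      proof (intro prod_pos)
        fix j assume "j \<in> FS"
        then have "norm (x - Y $ j) / nn > 0" using FS1[OF \<open>j \<in> FS\<close>] nn1 by (intro divide_pos_pos) auto
        then show "\<bar>(x - Y $ j) $ i j\<bar> ^ Mj j > 0" using coord_pos[of j] by simp
      qed
      define r' where "r' = Etot / P"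
      have kb: "norm (K_piece a \<phi>0 x Y k) \<le> r' * r ^ k" for k
      proof -
        define g where "g = (\<lambda>z. a x z * complex_of_real (LP_piece \<phi>0 k z))"
        have Kp: "K_piece a \<phi>0 x Y k = integral\<^sup>L lborel (\<lambda>z. g z * Psi W z)"
          unfolding K_piece_def g_def W_def phase_Psi ..
        have gs: "smooth_fun g" unfolding g_def by (rule smooth_mult[OF ax E.piece_c_smooth])
        have gsupp: "g z = 0" if "norm z \<ge> 2 ^ (k + 1) + 1" for z
        proof -
          have "z \<notin> Ann k" using that unfolding Ann_def by auto
          then have "dderiv [] (LP_piece \<phi>0 k) z = 0" by (rule piece_supp[OF assms(5)])
          then show ?thesis unfolding g_def by simp
        qed
        have ibp: "integral\<^sup>L lborel (\<lambda>z. dderiv ds g z * Psi W z)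
           = (\<Prod>e'\<leftarrow>ds. - (\<i> * complex_of_real (W \<bullet> e'))) * integral\<^sup>L lborel (\<lambda>z. g z * Psi W z)"
          by (rule ibp_iter[OF gs gsupp _ dsB]) auto
        have "P * norm (K_piece a \<phi>0 x Y k) = norm (integral\<^sup>L lborel (\<lambda>z. dderiv ds g z * Psi W z))"
          unfolding ibp Kp norm_mult norm_prod_list_c Pprod ..
        also have "\<dots> \<le> E.Ed ds * 4 ^ DIM((real^'n)^'N) * 2 powr (real k * (m - \<rho> * real (length ds) + real DIM((real^'n)^'N)))"
          unfolding g_def by (rule E.int_est[OF ax fb dsB])
        also have "\<dots> \<le> Etot * r ^ k"
        proof (intro mult_mono)
          show "E.Ed ds * 4 ^ DIM((real^'n)^'N) \<le> Etot"
            unfolding dim Etot_def using finD dsD E.Ed_nonneg Dset_def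
            by (intro member_le_sum) (auto simp: Dset_def in_lists_conv_set subset_iff intro!: mult_nonneg_nonneg E.Ed_nonneg)
          have "real k * (m - \<rho> * real (length ds) + real DIM((real^'n)^'N)) \<le> real k * \<theta>"
            unfolding \<theta>_def dim using lenM0 assms(1)
            by (intro mult_left_mono) (auto intro!: mult_left_mono)
          then have "2 powr (real k * (m - \<rho> * real (length ds) + real DIM((real^'n)^'N))) \<le> 2 powr (real k * \<theta>)"
            by simp
          also have "2 powr (real k * \<theta>) = r ^ k"
            unfolding r_def by (simp add: powr_realpow[symmetric] powr_powr mult.commute)
          finally show "2 powr (real k * (m - \<rho> * real (length ds) + real DIM((real^'n)^'N))) \<le> r ^ k" .
        qed (use Etot0 r in auto)
        finally have "P * norm (K_piece a \<phi>0 x Y k) \<le> Etot * r ^ k" .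
        then show ?thesis unfolding r'_def using Ppos by (simp add: field_simps)
      qed
      have sg: "summable (\<lambda>k. r' * r ^ k)"
        using r by (intro summable_mult summable_geometric) auto
      have summ: "summable (K_piece a \<phi>0 x Y)"
        by (rule summable_comparison_test[OF _ sg]) (use kb in auto)
      have "norm (K_osc a \<phi>0 x Y) \<le> (\<Sum>k. r' * r ^ k)"
        unfolding K_osc_def by (rule norm_suminf_le[OF kb sg])
      also have "\<dots> = r' * (\<Sum>k. r ^ k)"
        by (rule suminf_mult[OF summable_geometric]) (use r in auto)
      also have "\<dots> = Etot / P / (1 - r)"
        unfolding r'_def using suminf_geometric[of r] r by (simp add: divide_simps)
      also have "\<dots> \<le> Cf * (\<Prod>j\<in>FS. norm (x - Y $ j) powr (- Nexp j))"
      proof -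
        define Q where "Q = (\<Prod>j\<in>FS. norm (x - Y $ j) powr Nexp j)"
        have Qpos: "Q > 0" unfolding Q_def using FS1 by (intro prod_pos) fastforce
        have "P \<ge> (\<Prod>j\<in>FS. (norm (x - Y $ j) / nn) ^ Mj j)"
          unfolding P_def using coord_pos nn1 by (intro prod_mono) (auto intro: power_mono)
        also have "(\<Prod>j\<in>FS. (norm (x - Y $ j) / nn) ^ Mj j) = (\<Prod>j\<in>FS. norm (x - Y $ j) ^ Mj j) / nn ^ (\<Sum>j\<in>FS. Mj j)"
          by (simp add: power_divide prod_dividef power_sum)
        also have "\<dots> \<ge> Q / nn ^ L"
        proof (rule frac_le)
          show "0 \<le> (\<Prod>j\<in>FS. norm (x - Y $ j) ^ Mj j)" by (simp add: prod_nonneg)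
          show "Q \<le> (\<Prod>j\<in>FS. norm (x - Y $ j) ^ Mj j)"
            unfolding Q_def
          proof (rule prod_mono, intro conjI)
            fix j assume j: "j \<in> FS"
            show "0 \<le> norm (x - Y $ j) powr Nexp j" by simp
            have "norm (x - Y $ j) powr Nexp j \<le> norm (x - Y $ j) powr real (Mj j)"
              using FS1[OF j] unfolding Mj_def by (intro powr_mono) (auto, linarith)
            also have "\<dots> = norm (x - Y $ j) ^ Mj j" using FS1[OF j] by (intro powr_realpow) linarith
            finally show "norm (x - Y $ j) powr Nexp j \<le> norm (x - Y $ j) ^ Mj j" .
          qed
          show "0 < nn ^ (\<Sum>j\<in>FS. Mj j)" using nn1 by simp
          show "nn ^ (\<Sum>j\<in>FS. Mj j) \<le> nn ^ L"
            using nn1 lenL unfolding lends by (intro power_increasing) auto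
        qed
        finally have PQ: "P \<ge> Q / nn ^ L" .
        have "Etot / P / (1 - r) \<le> nn ^ L * Etot / (1 - r) * (1 / Q)"
          by (rule final_bound[OF Ppos Qpos PQ _ Etot0 r(2)]) (use nn1 in simp)
        also have "1 / Q = (\<Prod>j\<in>FS. norm (x - Y $ j) powr (- Nexp j))"
          unfolding Q_def by (simp add: powr_minus prod_inversef[symmetric] divide_inverse)
        finally show ?thesis unfolding Cf_def .
      qed
      finally show "summable (K_piece a \<phi>0 x Y) \<and>
           norm (K_osc a \<phi>0 x Y) \<le> Cf * (\<Prod>j\<in>far_set x Y. norm (x - Y $ j) powr (- Nexp j))"
        using summ unfolding FS_def by simp
    qed
  qed
  then show ?thesis by blast
qed


end
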